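(* Let $AP=\{p\}$ and let $L_2$ be the set of Kripke trees $\mathcal{T}$ over $AP$ for which there is an infinite path $\pi$ from the root such that $p$ holds at no node of $\pi$ and, for every $i\ge0$, the node $\pi(2i)$ has a child at which $p$ holds. Then there is no CCTL$^*$ formula $\varphi$ over $AP$ with $\mathcal{L}(\varphi)=L_2$.
   Context: A Kripke tree over $AP$ is a non-blocking tree (nonempty prefix-closed set of words over some set of directions with root $\varepsilon$, every node having a child $w\cdot d$) with a labelling of nodes by subsets of $AP$; an infinite path from the root is a sequence $\pi(0)=\varepsilon,\pi(1),\dots$ with each $\pi(k+1)$ a child of $\pi(k)$. CCTL$^*$: state formulas $\varphi::=\top\mid p\mid\neg\varphi\mid\varphi\wedge\varphi\mid\mathsf{E}\psi\mid\mathsf{D}^k\varphi$ ($k\ge1$), path formulas $\psi::=\varphi\mid\neg\psi\mid\psi\wedge\psi\mid\mathsf{X}\psi\mid\psi\mathsf{U}\psi$, with $(\mathcal{T},w)\models\mathsf{E}\psi$ iff some infinite path starting at $w$ satisfies $\psi$ at position $0$, $(\mathcal{T},w)\models\mathsf{D}^k\varphi$ iff at least $k$ distinct children of $w$ satisfy $\varphi$, $(\mathcal{T},\pi,i)\models\varphi$ iff $(\mathcal{T},\pi(i))\models\varphi$ for state formulas, and standard semantics of $\mathsf{X}$, $\mathsf{U}$ and Boolean connectives. $\mathcal{L}(\varphi)$ is the set of Kripke trees $\mathcal{T}$ with $(\mathcal{T},\varepsilon)\models\varphi$. *)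

theory Defs
  imports Main
begin

text \<open>Kripke trees: nodes are words (lists) over directions (here nat),
  w @ [d] is the child of w in direction d; labels are subsets of AP ('a).\<close>

record 'a ktree =
  nodes :: "nat list set"
  lab :: "nat list \<Rightarrow> 'a set"

definition kripke_tree :: "'a ktree \<Rightarrow> bool" where
  "kripke_tree T \<longleftrightarrow> nodes T \<noteq> {} \<and> [] \<in> nodes T
     \<and> (\<forall>w d. w @ [d] \<in> nodes T \<longrightarrow> w \<in> nodes T)
     \<and> (\<forall>w \<in> nodes T. \<exists>d. w @ [d] \<in> nodes T)"

definition is_path :: "'a ktree \<Rightarrow> nat list \<Rightarrow> (nat \<Rightarrow> nat list) \<Rightarrow> bool" where
  "is_path T w \<pi> \<longleftrightarrow> \<pi> 0 = w \<and> w \<in> nodes T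
     \<and> (\<forall>k. \<exists>d. \<pi> (Suc k) = \<pi> k @ [d] \<and> \<pi> (Suc k) \<in> nodes T)"

datatype 'a sform =
    STrue
  | SProp 'a
  | SNot "'a sform"
  | SAnd "'a sform" "'a sform"
  | SE "'a pform"
  | SD nat "'a sform"
and 'a pform =
    PState "'a sform"
  | PNot "'a pform"
  | PAnd "'a pform" "'a pform"
  | PX "'a pform"
  | PU "'a pform" "'a pform"

fun wf_s :: "'a sform \<Rightarrow> bool" and wf_p :: "'a pform \<Rightarrow> bool" where
  "wf_s STrue = True"
| "wf_s (SProp p) = True"
| "wf_s (SNot f) = wf_s f"
| "wf_s (SAnd f g) = (wf_s f \<and> wf_s g)"
| "wf_s (SE g) = wf_p g"
| "wf_s (SD k f) = (k \<ge> 1 \<and> wf_s f)"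
| "wf_p (PState f) = wf_s f"
| "wf_p (PNot g) = wf_p g"
| "wf_p (PAnd g h) = (wf_p g \<and> wf_p h)"
| "wf_p (PX g) = wf_p g"
| "wf_p (PU g h) = (wf_p g \<and> wf_p h)"

fun sat_s :: "'a ktree \<Rightarrow> nat list \<Rightarrow> 'a sform \<Rightarrow> bool"
and sat_p :: "'a ktree \<Rightarrow> (nat \<Rightarrow> nat list) \<Rightarrow> nat \<Rightarrow> 'a pform \<Rightarrow> bool" where
  "sat_s T w STrue = True"
| "sat_s T w (SProp p) = (p \<in> lab T w)"
| "sat_s T w (SNot f) = (\<not> sat_s T w f)"
| "sat_s T w (SAnd f g) = (sat_s T w f \<and> sat_s T w g)"
| "sat_s T w (SE g) = (\<exists>\<pi>. is_path T w \<pi> \<and> sat_p T \<pi> 0 g)"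
| "sat_s T w (SD k f) = (\<exists>S. finite S \<and> card S = k \<and>
      S \<subseteq> {d. w @ [d] \<in> nodes T \<and> sat_s T (w @ [d]) f})"
| "sat_p T \<pi> i (PState f) = sat_s T (\<pi> i) f"
| "sat_p T \<pi> i (PNot g) = (\<not> sat_p T \<pi> i g)"
| "sat_p T \<pi> i (PAnd g h) = (sat_p T \<pi> i g \<and> sat_p T \<pi> i h)"
| "sat_p T \<pi> i (PX g) = sat_p T \<pi> (Suc i) g"
| "sat_p T \<pi> i (PU g h) = (\<exists>j \<ge> i. sat_p T \<pi> j h \<and> (\<forall>k. i \<le> k \<and> k < j \<longrightarrow> sat_p T \<pi> k g))"

definition lang :: "'a sform \<Rightarrow> 'a ktree set" where
  "lang \<phi> = {T. kripke_tree T \<and> sat_s T [] \<phi>}"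

text \<open>AP = {p}, modelled as the unit type (p = ()).\<close>
definition L2 :: "unit ktree set" where
  "L2 = {T. kripke_tree T \<and> (\<exists>\<pi>. is_path T [] \<pi> \<and> (\<forall>k. () \<notin> lab T (\<pi> k))
        \<and> (\<forall>i. \<exists>d. \<pi> (2*i) @ [d] \<in> nodes T \<and> () \<in> lab T (\<pi> (2*i) @ [d])))}"

end

theory Submission
  imports Defs
begin


datatype st = M nat | Infs | Side

fun succ :: "st \<Rightarrow> st set" where
  "succ (M 0) = {Infs}"
| "succ (M (Suc i)) = {M i, Side}"
| "succ Infs = {Infs, Side}"
| "succ Side = {Side}"

definition alab :: "st \<Rightarrow> unit set" where
  "alab s = (if s = Side then {()} else {})"

fun asat :: "st \<Rightarrow> unit sform \<Rightarrow> bool"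
and apath :: "(nat \<Rightarrow> st) \<Rightarrow> nat \<Rightarrow> unit pform \<Rightarrow> bool" where
  "asat s STrue = True"
| "asat s (SProp p) = (p \<in> alab s)"
| "asat s (SNot f) = (\<not> asat s f)"
| "asat s (SAnd f g) = (asat s f \<and> asat s g)"
| "asat s (SE g) = (\<exists>\<rho>. \<rho> 0 = s \<and> (\<forall>k. \<rho> (Suc k) \<in> succ (\<rho> k)) \<and> apath \<rho> 0 g)"
| "asat s (SD k f) = (k \<le> card {t \<in> succ s. asat t f})"
| "apath \<rho> i (PState f) = asat (\<rho> i) f"
| "apath \<rho> i (PNot g) = (\<not> apath \<rho> i g)"
| "apath \<rho> i (PAnd g h) = (apath \<rho> i g \<and> apath \<rho> i h)"
| "apath \<rho> i (PX g) = apath \<rho> (Suc i) g"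
| "apath \<rho> i (PU g h) = (\<exists>j \<ge> i. apath \<rho> j h \<and> (\<forall>k. i \<le> k \<and> k < j \<longrightarrow> apath \<rho> k g))"

lemma apath_cons_aux:
  shows c1: "(f::unit sform) = f" and c2: "\<forall>i. apath (case_nat x \<rho>) (Suc i) g = apath \<rho> i g"
proof (induct f and g)
  case (PU g1 g2)
  show ?case
  proof
    fix i
    have A: "apath (case_nat x \<rho>) (Suc k) g1 = apath \<rho> k g1" "apath (case_nat x \<rho>) (Suc k) g2 = apath \<rho> k g2" for k
      using PU by auto
    show "apath (case_nat x \<rho>) (Suc i) (PU g1 g2) = apath \<rho> i (PU g1 g2)"
    proof
      assume "apath (case_nat x \<rho>) (Suc i) (PU g1 g2)"
      then obtain j where j: "j \<ge> Suc i" "apath (case_nat x \<rho>) j g2"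
        "\<forall>k. Suc i \<le> k \<and> k < j \<longrightarrow> apath (case_nat x \<rho>) k g1" by auto
      obtain j' where jj: "j = Suc j'" using j(1) by (cases j) auto
      have "\<forall>k. i \<le> k \<and> k < j' \<longrightarrow> apath \<rho> k g1"
        using j(3) jj A by (metis Suc_le_mono Suc_less_eq)
      then show "apath \<rho> i (PU g1 g2)" using j jj A by auto
    next
      assume "apath \<rho> i (PU g1 g2)"
      then obtain j where j: "j \<ge> i" "apath \<rho> j g2"
        "\<forall>k. i \<le> k \<and> k < j \<longrightarrow> apath \<rho> k g1" by auto
      have "\<forall>k. Suc i \<le> k \<and> k < Suc j \<longrightarrow> apath (case_nat x \<rho>) k g1"
      proof (intro allI impI)
        fix k assume k: "Suc i \<le> k \<and> k < Suc j"
        then obtain k' where "k = Suc k'" by (cases k) auto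
        then show "apath (case_nat x \<rho>) k g1" using k j A by auto
      qed
      then show "apath (case_nat x \<rho>) (Suc i) (PU g1 g2)" using j A
        by (metis Suc_le_mono apath.simps(5))
    qed
  qed
qed auto

lemma apath_cons: "apath (case_nat x \<rho>) (Suc i) g = apath \<rho> i g"
  using c2 by blast

lemma "size (PState f) = Suc (size f)" "size (PX g) = Suc (size g)" by auto

definition ispath :: "(nat \<Rightarrow> st) \<Rightarrow> bool" where
  "ispath \<rho> \<longleftrightarrow> (\<forall>k. \<rho> (Suc k) \<in> succ (\<rho> k))"

lemma side_stays:
  assumes "ispath \<rho>" "\<rho> t = Side" "t \<le> k" shows "\<rho> k = Side"
  using assms(3)
proof (induct k rule: dec_induct)
  case base then show ?case using assms(2) by simp
next
  case (step k)
  then show ?case using assms(1) unfolding ispath_def by (metis singletonD succ.simps(4))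
qed

lemma main_desc:
  assumes "ispath \<rho>" "\<rho> 0 = M i" shows "k \<le> i \<Longrightarrow> \<rho> k = M (i - k) \<or> \<rho> k = Side"
proof (induct k)
  case 0 then show ?case using assms by simp
next
  case (Suc k)
  then have "\<rho> k = M (i - k) \<or> \<rho> k = Side" by simp
  then show ?case
  proof
    assume a: "\<rho> k = M (i - k)"
    have "i - k = Suc (i - Suc k)" using Suc(2) by simp
    then have "\<rho> (Suc k) \<in> {M (i - Suc k), Side}" using assms(1) a unfolding ispath_def by (metis succ.simps(2))
    then show ?thesis by auto
  next
    assume "\<rho> k = Side"
    then show ?thesis using side_stays[OF assms(1)] by auto
  qed
qed

lemma path_cases:
  assumes "ispath \<rho>" "\<rho> 0 = M i" "h \<le> i"
  shows "(\<forall>k<h. \<rho> k = M (i - k)) \<or> (\<forall>k. \<rho> k = Side \<or> (\<exists>j. \<rho> k = M j \<and> i < j + h))"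
proof (cases "\<forall>k<h. \<rho> k = M (i - k)")
  case False
  then obtain k0 where k0: "k0 < h" "\<rho> k0 \<noteq> M (i - k0)" by auto
  then have s: "\<rho> k0 = Side" using main_desc[OF assms(1,2), of k0] assms(3) by auto
  have "\<rho> k = Side \<or> (\<exists>j. \<rho> k = M j \<and> i < j + h)" for k
  proof (cases "k0 \<le> k")
    case True then show ?thesis using side_stays[OF assms(1) s] by auto
  next
    case False
    then show ?thesis using main_desc[OF assms(1,2), of k] k0 assms(3) by auto
  qed
  then show ?thesis by auto
qed simp

lemma SE_step:
  assumes P: "\<And>\<rho> x. (\<exists>a\<ge>T. x = M a) \<Longrightarrow> (\<forall>k<h. \<exists>a \<ge> T. \<rho> k = M a) \<Longrightarrow> apath (case_nat x \<rho>) 0 g = apath \<rho> 0 g"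
  and Q: "\<And>\<rho> \<rho>' i. (\<forall>k. \<rho> k = \<rho>' k \<or> (\<exists>a b. \<rho> k = M a \<and> \<rho>' k = M b \<and> T \<le> a \<and> T \<le> b)) \<Longrightarrow> apath \<rho> i g = apath \<rho>' i g"
  and i: "i \<ge> T + h + 2"
  shows "asat (M (Suc i)) (SE g) = asat (M i) (SE g)"
proof
  assume "asat (M (Suc i)) (SE g)"
  then obtain \<rho> where r: "\<rho> 0 = M (Suc i)" "ispath \<rho>" "apath \<rho> 0 g"
    unfolding ispath_def by auto
  from path_cases[OF r(2,1), of "Suc (Suc h)"] i
  consider "\<forall>k<Suc (Suc h). \<rho> k = M (Suc i - k)" | "\<forall>k. \<rho> k = Side \<or> (\<exists>j. \<rho> k = M j \<and> Suc i < j + Suc (Suc h))"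
    by auto
  then show "asat (M i) (SE g)"
  proof cases
    case 1
    define \<rho>' where "\<rho>' = (\<lambda>k. \<rho> (Suc k))"
    have e: "\<rho> = case_nat (M (Suc i)) \<rho>'"
      by (rule ext, simp add: \<rho>'_def r(1) split: nat.split)
    have "apath \<rho>' 0 g"
    proof -
      have "apath (case_nat (M (Suc i)) \<rho>') 0 g = apath \<rho>' 0 g"
      proof (rule P)
        show "\<forall>k<h. \<exists>a\<ge>T. \<rho>' k = M a"
        proof (intro allI impI)
          fix k assume "k < h"
          then have "\<rho>' k = M (i - k)" using 1 unfolding \<rho>'_def by auto
          then show "\<exists>a\<ge>T. \<rho>' k = M a" using i \<open>k < h\<close> by auto
        qed
      qed (use i in auto)
      then show ?thesis using r(3) e by simp
    qed
    moreover have "\<rho>' 0 = M i" using 1 unfolding \<rho>'_def by auto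
    moreover have "ispath \<rho>'" using r(2) unfolding ispath_def \<rho>'_def by auto
    ultimately show ?thesis unfolding ispath_def by auto
  next
    case 2
    define dn where "dn = (\<lambda>s. case s of M j \<Rightarrow> M (j - 1) | _ \<Rightarrow> s)"
    define \<rho>' where "\<rho>' = (\<lambda>k. dn (\<rho> k))"
    have "apath \<rho> 0 g = apath \<rho>' 0 g"
    proof (rule Q, rule allI)
      fix k
      show "\<rho> k = \<rho>' k \<or> (\<exists>a b. \<rho> k = M a \<and> \<rho>' k = M b \<and> T \<le> a \<and> T \<le> b)"
        using 2[rule_format, of k] i unfolding \<rho>'_def dn_def by auto
    qed
    moreover have "\<rho>' 0 = M i" using r(1) unfolding \<rho>'_def dn_def by simp
    moreover have "ispath \<rho>'" unfolding ispath_def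
    proof
      fix k
      have s: "\<rho> (Suc k) \<in> succ (\<rho> k)" using r(2) unfolding ispath_def by auto
      from 2[rule_format, of k] show "\<rho>' (Suc k) \<in> succ (\<rho>' k)"
      proof
        assume "\<rho> k = Side"
        then show ?thesis using s unfolding \<rho>'_def dn_def by simp
      next
        assume "\<exists>j. \<rho> k = M j \<and> Suc i < j + Suc (Suc h)"
        then obtain j where j: "\<rho> k = M j" "Suc i < j + Suc (Suc h)" by auto
        have "j \<ge> 2" using i j by simp
        then obtain j' where j': "j = Suc (Suc j')" by (metis add_2_eq_Suc le_Suc_ex)
        have "\<rho> (Suc k) \<in> {M (Suc j'), Side}" using s j j' by simp
        then show ?thesis using j j' unfolding \<rho>'_def dn_def by auto
      qed
    qed
    ultimately show ?thesis using r(3) unfolding ispath_def by auto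
  qed
next
  assume "asat (M i) (SE g)"
  then obtain \<rho> where r: "\<rho> 0 = M i" "ispath \<rho>" "apath \<rho> 0 g"
    unfolding ispath_def by auto
  from path_cases[OF r(2,1), of "h"] i
  consider "\<forall>k<h. \<rho> k = M (i - k)" | "\<forall>k. \<rho> k = Side \<or> (\<exists>j. \<rho> k = M j \<and> i < j + h)"
    by auto
  then show "asat (M (Suc i)) (SE g)"
  proof cases
    case 1
    define \<rho>' where "\<rho>' = case_nat (M (Suc i)) \<rho>"
    have "apath \<rho>' 0 g = apath \<rho> 0 g" unfolding \<rho>'_def
    proof (rule P)
      show "\<forall>k<h. \<exists>a\<ge>T. \<rho> k = M a"
      proof (intro allI impI)
        fix k assume "k < h"
        then have "\<rho> k = M (i - k)" using 1 by auto
        then show "\<exists>a\<ge>T. \<rho> k = M a" using i \<open>k < h\<close> by auto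
      qed
    qed (use i in auto)
    moreover have "ispath \<rho>'" using r(1,2) unfolding ispath_def \<rho>'_def
      by (auto split: nat.split)
    moreover have "\<rho>' 0 = M (Suc i)" unfolding \<rho>'_def by simp
    ultimately show ?thesis using r(3) unfolding ispath_def by auto
  next
    case 2
    define up where "up = (\<lambda>s. case s of M j \<Rightarrow> M (Suc j) | _ \<Rightarrow> s)"
    define \<rho>' where "\<rho>' = (\<lambda>k. up (\<rho> k))"
    have "apath \<rho> 0 g = apath \<rho>' 0 g"
    proof (rule Q, rule allI)
      fix k
      show "\<rho> k = \<rho>' k \<or> (\<exists>a b. \<rho> k = M a \<and> \<rho>' k = M b \<and> T \<le> a \<and> T \<le> b)"
        using 2[rule_format, of k] i unfolding \<rho>'_def up_def by auto
    qed
    moreover have "\<rho>' 0 = M (Suc i)" using r(1) unfolding \<rho>'_def up_def by simp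
    moreover have "ispath \<rho>'" unfolding ispath_def
    proof
      fix k
      have s: "\<rho> (Suc k) \<in> succ (\<rho> k)" using r(2) unfolding ispath_def by auto
      from 2[rule_format, of k] show "\<rho>' (Suc k) \<in> succ (\<rho>' k)"
      proof
        assume "\<rho> k = Side"
        then show ?thesis using s unfolding \<rho>'_def up_def by simp
      next
        assume "\<exists>j. \<rho> k = M j \<and> i < j + h"
        then obtain j where j: "\<rho> k = M j" "i < j + h" by auto
        then obtain j' where j': "j = Suc j'" using i by (cases j) auto
        have "\<rho> (Suc k) \<in> {M j', Side}" using s j j' by simp
        then show ?thesis using j j' unfolding \<rho>'_def up_def by auto
      qed
    qed
    ultimately show ?thesis using r(3) unfolding ispath_def by auto
  qed
qed

lemma card_two:
  assumes "a \<noteq> Side" shows "card {t \<in> {a, Side}. P t} = of_bool (P a) + of_bool (P Side)"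
proof (cases "P a"; cases "P Side")
  assume "P a" "P Side"
  then have "{t \<in> {a, Side}. P t} = {a, Side}" by auto
  then show ?thesis using assms \<open>P a\<close> \<open>P Side\<close> by simp
next
  assume "P a" "\<not> P Side"
  then have "{t \<in> {a, Side}. P t} = {a}" by auto
  then show ?thesis using assms \<open>P a\<close> \<open>\<not> P Side\<close> by simp
next
  assume "\<not> P a" "P Side"
  then have "{t \<in> {a, Side}. P t} = {Side}" by auto
  then show ?thesis using assms \<open>\<not> P a\<close> \<open>P Side\<close> by simp
next
  assume "\<not> P a" "\<not> P Side"
  then have "{t \<in> {a, Side}. P t} = {}" by auto
  then show ?thesis using assms \<open>\<not> P a\<close> \<open>\<not> P Side\<close> by simp
qed

lemma SD_step:
  assumes "i \<ge> Suc N" and S: "\<And>j. j \<ge> N \<Longrightarrow> asat (M j) f = asat (M N) f"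
  shows "asat (M (Suc i)) (SD k f) = asat (M i) (SD k f)"
proof -
  obtain i' where i': "i = Suc i'" using assms(1) by (cases i) auto
  have "asat (M i) f = asat (M i') f" using S[of i] S[of i'] assms(1) i' by simp
  moreover have "card {t \<in> succ (M (Suc i)). asat t f} = of_bool (asat (M i) f) + of_bool (asat Side f)"
    unfolding succ.simps by (rule card_two) simp
  moreover have "card {t \<in> succ (M i). asat t f} = of_bool (asat (M i') f) + of_bool (asat Side f)"
    unfolding i' succ.simps by (rule card_two) simp
  ultimately show ?thesis by simp
qed

lemma stab:
  assumes "\<And>i. i \<ge> N \<Longrightarrow> P (Suc i) = P i" "i \<ge> N" shows "P i = P N"
  using assms(2)
proof (induct i rule: dec_induct)
  case (step n) then show ?case using assms(1)[of n] by simp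
qed simp

fun thr_s :: "'a sform \<Rightarrow> nat" and thr_p :: "'a pform \<Rightarrow> nat" where
  "thr_s STrue = 0"
| "thr_s (SProp p) = 0"
| "thr_s (SNot f) = thr_s f"
| "thr_s (SAnd f g) = max (thr_s f) (thr_s g)"
| "thr_s (SE g) = thr_p g + size g + 2"
| "thr_s (SD k f) = Suc (thr_s f)"
| "thr_p (PState f) = thr_s f"
| "thr_p (PNot g) = thr_p g"
| "thr_p (PAnd g h) = max (thr_p g) (thr_p h)"
| "thr_p (PX g) = thr_p g"
| "thr_p (PU g h) = max (thr_p g) (thr_p h)"

lemma prem_mono: fixes T T' :: nat shows "(\<exists>a\<ge>T. x = M a) \<Longrightarrow> T' \<le> T \<Longrightarrow> (\<exists>a\<ge>T'. x = M a)" by auto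
lemma prem_mono2: fixes h h' T T' :: nat and \<rho> :: "nat \<Rightarrow> st" shows "(\<forall>k<h. \<exists>a\<ge>T. \<rho> k = M a) \<Longrightarrow> T' \<le> T \<Longrightarrow> h' \<le> h \<Longrightarrow> (\<forall>k<h'. \<exists>a\<ge>T'. \<rho> k = M a)"
proof (intro allI impI)
  fix k assume "(\<forall>k<h. \<exists>a\<ge>T. \<rho> k = M a)" "T' \<le> T" "h' \<le> h" "k < h'"
  then have "k < h" by linarith
  then obtain a where "a \<ge> T" "\<rho> k = M a" using \<open>\<forall>k<h. \<exists>a\<ge>T. \<rho> k = M a\<close> by blast
  then show "\<exists>a\<ge>T'. \<rho> k = M a" using \<open>T' \<le> T\<close> by auto
qed




lemma rel_mono:
  fixes T T' :: nat
  assumes "\<forall>k. \<rho> k = \<rho>' k \<or> (\<exists>a b. \<rho> k = M a \<and> \<rho>' k = M b \<and> T \<le> a \<and> T \<le> b)" "T' \<le> T"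
  shows "\<forall>k. \<rho> k = \<rho>' k \<or> (\<exists>a b. \<rho> k = M a \<and> \<rho>' k = M b \<and> T' \<le> a \<and> T' \<le> b)"
  using assms by (meson order_trans)

lemma main_abs:
  shows ms: "\<forall>i. i \<ge> thr_s f \<longrightarrow> asat (M i) f = asat (M (thr_s f)) f"
  and mp: "(\<forall>\<rho> x. (\<exists>a\<ge>thr_p g. x = M a) \<longrightarrow> (\<forall>k<size g. \<exists>a \<ge> thr_p g. \<rho> k = M a) \<longrightarrow> apath (case_nat x \<rho>) 0 g = apath \<rho> 0 g)
    \<and> (\<forall>\<rho> \<rho>' i. (\<forall>k. \<rho> k = \<rho>' k \<or> (\<exists>a b. \<rho> k = M a \<and> \<rho>' k = M b \<and> thr_p g \<le> a \<and> thr_p g \<le> b)) \<longrightarrow> apath \<rho> i g = apath \<rho>' i g)"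
proof (induct f and g)
  case STrue then show ?case by simp
next
  case (SProp x) then show ?case by (simp add: alab_def)
next
  case (SNot f)
  show ?case
  proof (intro allI impI)
    fix i assume "thr_s (SNot f) \<le> i"
    then show "asat (M i) (SNot f) = asat (M (thr_s (SNot f))) (SNot f)" using SNot[rule_format, of i] by simp
  qed
next
  case (SAnd f1 f2)
  show ?case
  proof (intro allI impI)
    fix i assume i: "thr_s (SAnd f1 f2) \<le> i"
    have "asat (M i) f1 = asat (M (thr_s (SAnd f1 f2))) f1"
      using SAnd(1)[rule_format, of i] SAnd(1)[rule_format, of "thr_s (SAnd f1 f2)"] i by simp
    moreover have "asat (M i) f2 = asat (M (thr_s (SAnd f1 f2))) f2"
      using SAnd(2)[rule_format, of i] SAnd(2)[rule_format, of "thr_s (SAnd f1 f2)"] i by simp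
    ultimately show "asat (M i) (SAnd f1 f2) = asat (M (thr_s (SAnd f1 f2))) (SAnd f1 f2)" by simp
  qed
next
  case (SE g)
  have st: "asat (M (Suc i)) (SE g) = asat (M i) (SE g)" if "i \<ge> thr_s (SE g)" for i
    apply (rule SE_step[of "thr_p g" "size g" g])
    subgoal using SE[THEN conjunct1, rule_format] by blast
    subgoal using SE[THEN conjunct2, rule_format] by blast
    using that by simp
  show ?case using stab[of "thr_s (SE g)" "\<lambda>i. asat (M i) (SE g)"] st by blast
next
  case (SD k f)
  have SD': "\<And>j. j \<ge> thr_s f \<Longrightarrow> asat (M j) f = asat (M (thr_s f)) f" using SD by blast
  have st: "asat (M (Suc i)) (SD k f) = asat (M i) (SD k f)" if "i \<ge> thr_s (SD k f)" for i
    apply (rule SD_step[of "thr_s f" i])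
    using that apply simp
    using SD' by blast
  show ?case using stab[of "thr_s (SD k f)" "\<lambda>i. asat (M i) (SD k f)"] st by blast
next
  case (PState f)
  show ?case
  proof (intro conjI allI impI)
    fix \<rho> :: "nat \<Rightarrow> st" and x
    assume "\<exists>a\<ge>thr_p (PState f). x = M a" "\<forall>k<size (PState f). \<exists>a\<ge>thr_p (PState f). \<rho> k = M a"
    then obtain a b where "x = M a" "\<rho> 0 = M b" "a \<ge> thr_s f" "b \<ge> thr_s f" by auto
    then show "apath (case_nat x \<rho>) 0 (PState f) = apath \<rho> 0 (PState f)"
      using PState[rule_format, of a] PState[rule_format, of b] by simp
  next
    fix \<rho> \<rho>' :: "nat \<Rightarrow> st" and i :: nat
    assume "\<forall>k. \<rho> k = \<rho>' k \<or> (\<exists>a b. \<rho> k = M a \<and> \<rho>' k = M b \<and> thr_p (PState f) \<le> a \<and> thr_p (PState f) \<le> b)"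
    then have "\<rho> i = \<rho>' i \<or> (\<exists>a b. \<rho> i = M a \<and> \<rho>' i = M b \<and> thr_s f \<le> a \<and> thr_s f \<le> b)" by auto
    then show "apath \<rho> i (PState f) = apath \<rho>' i (PState f)"
    proof
      assume "\<rho> i = \<rho>' i" then show ?thesis by simp
    next
      assume "\<exists>a b. \<rho> i = M a \<and> \<rho>' i = M b \<and> thr_s f \<le> a \<and> thr_s f \<le> b"
      then obtain a b where "\<rho> i = M a" "\<rho>' i = M b" "thr_s f \<le> a" "thr_s f \<le> b" by blast
      then show ?thesis using PState[rule_format, of a] PState[rule_format, of b] by simp
    qed
  qed
next
  case (PNot g) then show ?case by simp
next
  case (PAnd g1 g2)
  show ?case
  proof (intro conjI allI impI)
    fix \<rho> :: "nat \<Rightarrow> st" and x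
    assume a: "\<exists>a\<ge>thr_p (PAnd g1 g2). x = M a" "\<forall>k<size (PAnd g1 g2). \<exists>a\<ge>thr_p (PAnd g1 g2). \<rho> k = M a"
    have "apath (case_nat x \<rho>) 0 g1 = apath \<rho> 0 g1"
      using PAnd(1) prem_mono[OF a(1), of "thr_p g1"] prem_mono2[OF a(2), of "thr_p g1" "size g1"] by simp
    moreover have "apath (case_nat x \<rho>) 0 g2 = apath \<rho> 0 g2"
      using PAnd(2) prem_mono[OF a(1), of "thr_p g2"] prem_mono2[OF a(2), of "thr_p g2" "size g2"] by simp
    ultimately show "apath (case_nat x \<rho>) 0 (PAnd g1 g2) = apath \<rho> 0 (PAnd g1 g2)" by simp
  next
    fix \<rho> \<rho>' :: "nat \<Rightarrow> st" and i :: nat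
    assume a: "\<forall>k. \<rho> k = \<rho>' k \<or> (\<exists>a b. \<rho> k = M a \<and> \<rho>' k = M b \<and> thr_p (PAnd g1 g2) \<le> a \<and> thr_p (PAnd g1 g2) \<le> b)"
    have "apath \<rho> i g1 = apath \<rho>' i g1" by (rule PAnd(1)[THEN conjunct2, rule_format]) (use rel_mono[OF a, of "thr_p g1"] in simp)
    moreover have "apath \<rho> i g2 = apath \<rho>' i g2" by (rule PAnd(2)[THEN conjunct2, rule_format]) (use rel_mono[OF a, of "thr_p g2"] in simp)
    ultimately show "apath \<rho> i (PAnd g1 g2) = apath \<rho>' i (PAnd g1 g2)" by simp
  qed
next
  case (PX g)
  show ?case
  proof (intro conjI allI impI)
    fix \<rho> :: "nat \<Rightarrow> st" and x
    assume a: "\<exists>a\<ge>thr_p (PX g). x = M a" "\<forall>k<size (PX g). \<exists>a\<ge>thr_p (PX g). \<rho> k = M a"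
    have e: "\<rho> = case_nat (\<rho> 0) (\<lambda>k. \<rho> (Suc k))" by (rule ext, simp split: nat.split)
    have "apath (case_nat (\<rho> 0) (\<lambda>k. \<rho> (Suc k))) 0 g = apath (\<lambda>k. \<rho> (Suc k)) 0 g"
      using PX a by auto
    then have "apath \<rho> 0 g = apath \<rho> 1 g" using e apath_cons[of "\<rho> 0" "\<lambda>k. \<rho> (Suc k)" 0 g] by simp
    then show "apath (case_nat x \<rho>) 0 (PX g) = apath \<rho> 0 (PX g)" using apath_cons[of x \<rho> 0 g] by simp
  next
    fix \<rho> \<rho>' :: "nat \<Rightarrow> st" and i :: nat
    assume a: "\<forall>k. \<rho> k = \<rho>' k \<or> (\<exists>a b. \<rho> k = M a \<and> \<rho>' k = M b \<and> thr_p (PX g) \<le> a \<and> thr_p (PX g) \<le> b)"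
    then show "apath \<rho> i (PX g) = apath \<rho>' i (PX g)" using PX by simp
  qed
next
  case (PU g1 g2)
  show ?case
  proof (intro conjI allI impI)
    fix \<rho> :: "nat \<Rightarrow> st" and x
    assume a: "\<exists>a\<ge>thr_p (PU g1 g2). x = M a" "\<forall>k<size (PU g1 g2). \<exists>a\<ge>thr_p (PU g1 g2). \<rho> k = M a"
    have h1: "apath (case_nat x \<rho>) 0 g1 = apath \<rho> 0 g1"
      using PU(1) prem_mono[OF a(1), of "thr_p g1"] prem_mono2[OF a(2), of "thr_p g1" "size g1"] by simp
    have h2: "apath (case_nat x \<rho>) 0 g2 = apath \<rho> 0 g2"
      using PU(2) prem_mono[OF a(1), of "thr_p g2"] prem_mono2[OF a(2), of "thr_p g2" "size g2"] by simp
    have sh: "apath (case_nat x \<rho>) (Suc k) gg = apath \<rho> k gg" for k gg using apath_cons by blast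
    show "apath (case_nat x \<rho>) 0 (PU g1 g2) = apath \<rho> 0 (PU g1 g2)"
    proof
      assume "apath (case_nat x \<rho>) 0 (PU g1 g2)"
      then obtain j where j: "apath (case_nat x \<rho>) j g2" "\<forall>k<j. apath (case_nat x \<rho>) k g1" by auto
      show "apath \<rho> 0 (PU g1 g2)"
      proof (cases j)
        case 0 then show ?thesis using j h2 by auto
      next
        case (Suc j')
        have "\<forall>k<j'. apath \<rho> k g1" using j(2) Suc sh by auto
        then show ?thesis using j(1) Suc sh by auto
      qed
    next
      assume "apath \<rho> 0 (PU g1 g2)"
      then obtain j where j: "apath \<rho> j g2" "\<forall>k<j. apath \<rho> k g1" by auto
      show "apath (case_nat x \<rho>) 0 (PU g1 g2)"
      proof (cases j)
        case 0 then show ?thesis using j h2 by auto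
      next
        case (Suc j')
        have "\<forall>k<Suc j. apath (case_nat x \<rho>) k g1"
        proof (intro allI impI)
          fix k assume "k < Suc j"
          then show "apath (case_nat x \<rho>) k g1"
            using j(2) Suc h1 sh by (cases k) auto
        qed
        then show ?thesis using j(1) sh[of j g2] by auto
      qed
    qed
  next
    fix \<rho> \<rho>' :: "nat \<Rightarrow> st" and i :: nat
    assume a: "\<forall>k. \<rho> k = \<rho>' k \<or> (\<exists>a b. \<rho> k = M a \<and> \<rho>' k = M b \<and> thr_p (PU g1 g2) \<le> a \<and> thr_p (PU g1 g2) \<le> b)"
    have "\<forall>i. apath \<rho> i g1 = apath \<rho>' i g1" by (intro allI, rule PU(1)[THEN conjunct2, rule_format]) (use rel_mono[OF a, of "thr_p g1"] in simp)
    moreover have "\<forall>i. apath \<rho> i g2 = apath \<rho>' i g2" by (intro allI, rule PU(2)[THEN conjunct2, rule_format]) (use rel_mono[OF a, of "thr_p g2"] in simp)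
    ultimately show "apath \<rho> i (PU g1 g2) = apath \<rho>' i (PU g1 g2)" by simp
  qed
qed




lemma subset_card_iff:
  assumes "finite C" shows "(\<exists>S. finite S \<and> card S = k \<and> S \<subseteq> C) \<longleftrightarrow> k \<le> card C"
proof
  assume "\<exists>S. finite S \<and> card S = k \<and> S \<subseteq> C"
  then show "k \<le> card C" using card_mono[OF assms] by auto
next
  assume "k \<le> card C"
  then obtain S where "S \<subseteq> C" "card S = k" "finite S" by (rule obtain_subset_with_card_n)
  then show "\<exists>S. finite S \<and> card S = k \<and> S \<subseteq> C" by auto
qed

lemma finite_succ: "finite (succ s)"
  by (cases s rule: succ.cases) auto

lemma corr:
  fixes T :: "unit ktree" and \<alpha> :: "nat list \<Rightarrow> st"
  assumes lab: "\<And>w. w \<in> nodes T \<Longrightarrow> lab T w = alab (\<alpha> w)"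
  and bij: "\<And>w. w \<in> nodes T \<Longrightarrow> bij_betw (\<lambda>d. \<alpha> (w @ [d])) {d. w @ [d] \<in> nodes T} (succ (\<alpha> w))"
  shows cs: "\<forall>w \<in> nodes T. sat_s T w f = asat (\<alpha> w) f"
  and cp: "\<forall>\<pi>. (\<forall>k. \<pi> k \<in> nodes T) \<longrightarrow> (\<forall>i. sat_p T \<pi> i g = apath (\<lambda>k. \<alpha> (\<pi> k)) i g)"
proof (induct f and g)
  case (SProp p) then show ?case using lab by simp
next
  case (SE g)
  show ?case
  proof
    fix w assume w: "w \<in> nodes T"
    show "sat_s T w (SE g) = asat (\<alpha> w) (SE g)"
    proof
      assume "sat_s T w (SE g)"
      then obtain \<pi> where p: "is_path T w \<pi>" "sat_p T \<pi> 0 g" by auto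
      have pn: "\<forall>k. \<pi> k \<in> nodes T"
      proof
        fix k show "\<pi> k \<in> nodes T" using p(1) unfolding is_path_def by (cases k) auto
      qed
      have "\<forall>k. \<alpha> (\<pi> (Suc k)) \<in> succ (\<alpha> (\<pi> k))"
      proof
        fix k
        obtain d where d: "\<pi> (Suc k) = \<pi> k @ [d]" "\<pi> (Suc k) \<in> nodes T" using p(1) unfolding is_path_def by blast
        show "\<alpha> (\<pi> (Suc k)) \<in> succ (\<alpha> (\<pi> k))"
          using bij[OF pn[rule_format, of k]] d unfolding bij_betw_def by auto
      qed
      moreover have "apath (\<lambda>k. \<alpha> (\<pi> k)) 0 g" using SE pn p(2) by auto
      moreover have "\<pi> 0 = w" using p(1) unfolding is_path_def by simp
      ultimately show "asat (\<alpha> w) (SE g)" by auto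
    next
      assume "asat (\<alpha> w) (SE g)"
      then obtain \<rho> where r: "\<rho> 0 = \<alpha> w" "\<forall>k. \<rho> (Suc k) \<in> succ (\<rho> k)" "apath \<rho> 0 g" by auto
      define nx where "nx = (\<lambda>k p. p @ [SOME d. p @ [d] \<in> nodes T \<and> \<alpha> (p @ [d]) = \<rho> (Suc k)])"
      define \<pi> where "\<pi> = rec_nat w nx"
      have inv: "\<pi> k \<in> nodes T \<and> \<alpha> (\<pi> k) = \<rho> k" for k
      proof (induct k)
        case 0 then show ?case using w r(1) unfolding \<pi>_def by simp
      next
        case (Suc k)
        have "\<rho> (Suc k) \<in> (\<lambda>d. \<alpha> (\<pi> k @ [d])) ` {d. \<pi> k @ [d] \<in> nodes T}"
          using bij[of "\<pi> k"] Suc r(2) unfolding bij_betw_def by auto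
        then have ex: "\<exists>d. \<pi> k @ [d] \<in> nodes T \<and> \<alpha> (\<pi> k @ [d]) = \<rho> (Suc k)" by auto
        have "\<pi> (Suc k) = nx k (\<pi> k)" unfolding \<pi>_def by simp
        then show ?case using someI_ex[OF ex] unfolding nx_def by simp
      qed
      have ip: "is_path T w \<pi>" unfolding is_path_def
      proof (intro conjI allI)
        show "\<pi> 0 = w" unfolding \<pi>_def by simp
        show "w \<in> nodes T" by (rule w)
        fix k
        have "\<pi> (Suc k) = nx k (\<pi> k)" unfolding \<pi>_def by simp
        then show "\<exists>d. \<pi> (Suc k) = \<pi> k @ [d] \<and> \<pi> (Suc k) \<in> nodes T" using inv[of "Suc k"] unfolding nx_def by auto
      qed
      have "(\<lambda>k. \<alpha> (\<pi> k)) = \<rho>" using inv by auto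
      then have "sat_p T \<pi> 0 g" using SE inv r(3) by auto
      then show "sat_s T w (SE g)" using ip by auto
    qed
  qed
next
  case (SD k f)
  show ?case
  proof
    fix w assume w: "w \<in> nodes T"
    let ?C = "{d. w @ [d] \<in> nodes T \<and> sat_s T (w @ [d]) f}"
    have b: "bij_betw (\<lambda>d. \<alpha> (w @ [d])) {d. w @ [d] \<in> nodes T} (succ (\<alpha> w))" using bij w by auto
    have sub: "?C \<subseteq> {d. w @ [d] \<in> nodes T}" by auto
    have inj: "inj_on (\<lambda>d. \<alpha> (w @ [d])) ?C" using inj_on_subset[OF bij_betw_imp_inj_on[OF b] sub] .
    have img: "(\<lambda>d. \<alpha> (w @ [d])) ` ?C = {t \<in> succ (\<alpha> w). asat t f}"
    proof
      show "(\<lambda>d. \<alpha> (w @ [d])) ` ?C \<subseteq> {t \<in> succ (\<alpha> w). asat t f}"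
        using b SD unfolding bij_betw_def by auto
      show "{t \<in> succ (\<alpha> w). asat t f} \<subseteq> (\<lambda>d. \<alpha> (w @ [d])) ` ?C"
      proof
        fix t assume t: "t \<in> {t \<in> succ (\<alpha> w). asat t f}"
        then obtain d where d: "w @ [d] \<in> nodes T" "\<alpha> (w @ [d]) = t"
        proof -
          have "t \<in> (\<lambda>d. \<alpha> (w @ [d])) ` {d. w @ [d] \<in> nodes T}" using b t unfolding bij_betw_def by simp
          then show ?thesis using that by blast
        qed
        have "sat_s T (w @ [d]) f = asat (\<alpha> (w @ [d])) f" using SD d(1) by blast
        then have "d \<in> ?C" using d t by simp
        then show "t \<in> (\<lambda>d. \<alpha> (w @ [d])) ` ?C" using d by blast
      qed
    qed
    have "finite ((\<lambda>d. \<alpha> (w @ [d])) ` ?C)" unfolding img using finite_succ[of "\<alpha> w"] by simp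
    then have fin: "finite ?C" using finite_imageD inj by blast
    have "card ?C = card {t \<in> succ (\<alpha> w). asat t f}" using card_image[OF inj] img by simp
    then show "sat_s T w (SD k f) = asat (\<alpha> w) (SD k f)"
      using subset_card_iff[OF fin, of k] by simp
  qed
qed auto




definition tnodes :: "nat \<Rightarrow> nat list set" where
  "tnodes n = {w. set w \<subseteq> {0,1} \<and> length (filter (\<lambda>x. x = 1) w) \<le> 1 \<and> (n < length w \<longrightarrow> w ! n \<noteq> 1)}"

definition TT :: "nat \<Rightarrow> unit ktree" where
  "TT n = \<lparr>nodes = tnodes n, lab = (\<lambda>w. if 1 \<in> set w then {()} else {})\<rparr>"

definition al :: "nat \<Rightarrow> nat list \<Rightarrow> st" where
  "al n w = (if 1 \<in> set w then Side else if length w \<le> n then M (n - length w) else Infs)"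

lemma filter_zero: "length (filter (\<lambda>x. x = (1::nat)) w) = 0 \<longleftrightarrow> 1 \<notin> set w"
  by (auto simp add: filter_empty_conv)

lemma children:
  assumes "w \<in> tnodes n"
  shows "{d. w @ [d] \<in> tnodes n} = (if 1 \<in> set w \<or> length w = n then {0} else {0,1})"
proof -
  have w: "set w \<subseteq> {0,1}" "length (filter (\<lambda>x. x = 1) w) \<le> 1" "n < length w \<longrightarrow> w ! n \<noteq> 1"
    using assms unfolding tnodes_def by auto
  have "w @ [d] \<in> tnodes n \<longleftrightarrow> d \<in> (if 1 \<in> set w \<or> length w = n then {0} else {0,1})" for d
  proof -
    have "w @ [d] \<in> tnodes n \<longleftrightarrow> d \<in> {0,1} \<and> length (filter (\<lambda>x. x = 1) w) + (if d = 1 then 1 else 0) \<le> 1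
           \<and> (n < Suc (length w) \<longrightarrow> (w @ [d]) ! n \<noteq> 1)"
      unfolding tnodes_def using w by auto
    also have "\<dots> \<longleftrightarrow> d \<in> {0,1} \<and> (d = 1 \<longrightarrow> 1 \<notin> set w) \<and> (d = 1 \<longrightarrow> length w \<noteq> n)"
    proof -
      have a: "length (filter (\<lambda>x. x = 1) w) + (if d = 1 then 1 else 0) \<le> 1 \<longleftrightarrow> (d = 1 \<longrightarrow> 1 \<notin> set w)"
        using w(2) filter_zero[of w] by auto
      have b: "(n < Suc (length w) \<longrightarrow> (w @ [d]) ! n \<noteq> 1) \<longleftrightarrow> (d = 1 \<longrightarrow> length w \<noteq> n)"
        using w(3) by (auto simp: nth_append less_Suc_eq)
      show ?thesis using a b by simp
    qed
    finally show ?thesis by auto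
  qed
  then show ?thesis by blast
qed

lemma TT_bij:
  assumes "w \<in> tnodes n"
  shows "bij_betw (\<lambda>d. al n (w @ [d])) {d. w @ [d] \<in> tnodes n} (succ (al n w))"
proof (cases "1 \<in> set w")
  case True
  then show ?thesis unfolding children[OF assms] al_def by (simp add: bij_betw_def)
next
  case False
  consider "length w = n" | "length w < n" | "length w > n" by linarith
  then show ?thesis
  proof cases
    case 1
    then show ?thesis using False unfolding children[OF assms] al_def by (simp add: bij_betw_def)
  next
    case 2
    then obtain m where m: "n - length w = Suc m" "n - Suc (length w) = m" by (metis Suc_diff_Suc)
    then show ?thesis using False 2 unfolding children[OF assms] al_def by (auto simp add: bij_betw_def)
  next
    case 3
    then show ?thesis using False unfolding children[OF assms] al_def by (auto simp add: bij_betw_def)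
  qed
qed

lemma TT_kripke: "kripke_tree (TT n)"
proof -
  have a: "[] \<in> tnodes n" unfolding tnodes_def by simp
  have b: "w \<in> tnodes n" if "w @ [d] \<in> tnodes n" for w d
    using that unfolding tnodes_def by (auto simp: nth_append)
  have c: "\<exists>d. w @ [d] \<in> tnodes n" if "w \<in> tnodes n" for w
    using children[OF that] by (metis (no_types, lifting) insertI1 mem_Collect_eq)
  show ?thesis unfolding kripke_tree_def TT_def using a b c by auto
qed

lemma TT_sat: "sat_s (TT n) [] f = asat (M n) f"
proof -
  have "\<forall>w \<in> nodes (TT n). sat_s (TT n) w f = asat (al n w) f"
  proof (rule cs)
    fix w assume "w \<in> nodes (TT n)"
    then show "lab (TT n) w = alab (al n w)" unfolding TT_def al_def alab_def by simp
  next
    fix w assume "w \<in> nodes (TT n)"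
    then show "bij_betw (\<lambda>d. al n (w @ [d])) {d. w @ [d] \<in> nodes (TT n)} (succ (al n w))"
      using TT_bij unfolding TT_def by simp
  qed
  moreover have "[] \<in> nodes (TT n)" unfolding TT_def tnodes_def by simp
  ultimately show ?thesis unfolding al_def by simp
qed

lemma rep_node: "replicate k 0 \<in> tnodes n"
  unfolding tnodes_def by auto

lemma TT_odd: "odd n \<Longrightarrow> TT n \<in> L2"
  unfolding L2_def
proof (simp add: TT_kripke, rule exI[of _ "\<lambda>k. replicate k 0"], intro conjI allI)
  assume "odd n"
  show "is_path (TT n) [] (\<lambda>k. replicate k 0)"
  proof -
    have "replicate (Suc k) 0 = replicate k (0::nat) @ [0]" for k by (simp add: replicate_append_same)
    then show ?thesis unfolding is_path_def TT_def using rep_node[of 0 n] rep_node[of "Suc _" n] by (auto simp del: replicate_Suc)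
  qed
  fix k show "() \<notin> lab (TT n) (replicate k 0)" unfolding TT_def by simp
next
  fix i assume "odd n"
  have ne: "n \<noteq> 2*i" using \<open>odd n\<close> by auto
  have "replicate (2*i) 0 @ [1] \<in> tnodes n" using ne unfolding tnodes_def
    by (auto simp: nth_append less_Suc_eq)
  then show "\<exists>d. replicate (2 * i) 0 @ [d] \<in> nodes (TT n) \<and> () \<in> lab (TT n) (replicate (2 * i) 0 @ [d])"
    unfolding TT_def by auto
qed

lemma TT_even: assumes "even n" shows "TT n \<notin> L2"
proof
  assume "TT n \<in> L2"
  then obtain \<pi> where p: "is_path (TT n) [] \<pi>" "\<forall>k. () \<notin> lab (TT n) (\<pi> k)"
    "\<forall>i. \<exists>d. \<pi> (2*i) @ [d] \<in> nodes (TT n) \<and> () \<in> lab (TT n) (\<pi> (2*i) @ [d])"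
    unfolding L2_def by auto
  have len: "length (\<pi> k) = k" for k
  proof (induct k)
    case 0 then show ?case using p(1) unfolding is_path_def by simp
  next
    case (Suc k)
    obtain d where "\<pi> (Suc k) = \<pi> k @ [d]" using p(1) unfolding is_path_def by blast
    then show ?case using Suc by simp
  qed
  obtain i where i: "n = 2 * i" using assms by auto
  obtain d where d: "\<pi> n @ [d] \<in> tnodes n" "1 \<in> set (\<pi> n @ [d])"
    using p(3)[rule_format, of i] i unfolding TT_def by (auto split: if_splits)
  have "1 \<notin> set (\<pi> n)" using p(2)[rule_format, of n] unfolding TT_def by (auto split: if_splits)
  then have "d = 1" using d(2) by auto
  then show False using d(1) len[of n] unfolding tnodes_def by (auto simp: nth_append)
qed

theorem corollary24:
  shows "\<not> (\<exists>\<phi> :: unit sform. wf_s \<phi> \<and> lang \<phi> = L2)"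
proof
  assume "\<exists>\<phi> :: unit sform. wf_s \<phi> \<and> lang \<phi> = L2"
  then obtain \<phi> :: "unit sform" where e: "lang \<phi> = L2" by blast
  have key: "TT n \<in> L2 \<longleftrightarrow> asat (M n) \<phi>" for n
    using e[symmetric] TT_sat[of n \<phi>] TT_kripke[of n] unfolding lang_def by auto
  define N where "N = thr_s \<phi>"
  have m: "\<And>i. i \<ge> N \<Longrightarrow> asat (M i) \<phi> = asat (M N) \<phi>"
    using ms[of \<phi>] unfolding N_def by blast
  have "asat (M (2*N+1)) \<phi> = asat (M N) \<phi>" "asat (M (2*N+2)) \<phi> = asat (M N) \<phi>"
    by (rule m, simp)+
  moreover have "TT (2*N+1) \<in> L2" by (rule TT_odd) simp
  moreover have "TT (2*N+2) \<notin> L2" by (rule TT_even) simp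
  ultimately show False using key[of "2*N+1"] key[of "2*N+2"] by simp
qed


end
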